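(* Any quantum algorithm which takes an $n\times n$ permutation matrix as input (with oracle access to its entries) and outputs the sign of the permutation matrix has query complexity at least $\Omega(n^{3/2})$.
   Context: A permutation matrix is a Boolean $n\times n$ matrix with exactly one entry $1$ in each row and each column; its entries equal to $1$ are at positions $(i,\pi(i))$ for a permutation $\pi$, and its sign is the sign of $\pi$. *)

theory Defs
  imports "HOL-Combinatorics.Permutations" Complex_Main
begin

(* Standard quantum query model. The Hilbert space has orthonormal basis
  |i,j,b,w> with query register (i,j), i,j < n (an entry of the n x n input matrix),
  answer bit b < 2, and workspace w < W. *)

type_synonym qidx = "nat \<times> nat \<times> nat \<times> nat"
type_synonym qstate = "qidx \<Rightarrow> complex"
type_synonym qop = "qidx \<Rightarrow> qidx \<Rightarrow> complex"

definition qbasis :: "nat \<Rightarrow> nat \<Rightarrow> qidx set" where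
  "qbasis n W = {(i,j,b,w). i < n \<and> j < n \<and> b < 2 \<and> w < W}"

definition unitary_on :: "qidx set \<Rightarrow> qop \<Rightarrow> bool" where
  "unitary_on B U \<longleftrightarrow>
     (\<forall>k\<in>B. \<forall>l\<in>B. (\<Sum>r\<in>B. cnj (U r k) * U r l) = (if k = l then 1 else 0))"

definition apply_op :: "qidx set \<Rightarrow> qop \<Rightarrow> qstate \<Rightarrow> qstate" where
  "apply_op B U \<psi> = (\<lambda>k. if k \<in> B then (\<Sum>l\<in>B. U k l * \<psi> l) else 0)"

definition query_gate :: "nat \<Rightarrow> nat \<Rightarrow> (nat \<Rightarrow> nat \<Rightarrow> bool) \<Rightarrow> qstate \<Rightarrow> qstate" where
  "query_gate n W M \<psi> = (\<lambda>(i,j,b,w). if (i,j,b,w) \<in> qbasis n W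
       then \<psi> (i, j, if M i j then 1 - b else b, w) else 0)"

definition init_state :: qstate where
  "init_state = (\<lambda>k. if k = (0,0,0,0) then 1 else 0)"

fun run :: "nat \<Rightarrow> nat \<Rightarrow> (nat \<Rightarrow> qop) \<Rightarrow> (nat \<Rightarrow> nat \<Rightarrow> bool) \<Rightarrow> nat \<Rightarrow> qstate" where
  "run n W U M 0 = apply_op (qbasis n W) (U 0) init_state"
| "run n W U M (Suc t) = apply_op (qbasis n W) (U (Suc t)) (query_gate n W M (run n W U M t))"

definition prob_out :: "nat \<Rightarrow> nat \<Rightarrow> qstate \<Rightarrow> nat \<Rightarrow> real" where
  "prob_out n W \<psi> c = (\<Sum>k\<in>{k \<in> qbasis n W. fst (snd (snd k)) = c}. (cmod (\<psi> k))\<^sup>2)"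

definition perm_matrix :: "(nat \<Rightarrow> nat) \<Rightarrow> nat \<Rightarrow> nat \<Rightarrow> bool" where
  "perm_matrix \<pi> = (\<lambda>i j. \<pi> i = j)"

definition computes_sign :: "nat \<Rightarrow> nat \<Rightarrow> nat \<Rightarrow> (nat \<Rightarrow> qop) \<Rightarrow> bool" where
  "computes_sign n W T U \<longleftrightarrow> 1 \<le> W \<and> (\<forall>t\<le>T. unitary_on (qbasis n W) (U t)) \<and>
     (\<forall>\<pi>. \<pi> permutes {..<n} \<longrightarrow>
        prob_out n W (run n W U (perm_matrix \<pi>) T) (if sign \<pi> = (1::int) then 0 else 1) \<ge> 2/3)"

end

theory Submission
  imports Defs
begin

definition ip :: "nat \<Rightarrow> nat \<Rightarrow> qstate \<Rightarrow> qstate \<Rightarrow> complex" where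
  "ip n W \<psi> \<phi> = (\<Sum>k\<in>qbasis n W. cnj (\<psi> k) * \<phi> k)"

definition nrm :: "nat \<Rightarrow> nat \<Rightarrow> qstate \<Rightarrow> real" where
  "nrm n W \<psi> = (\<Sum>k\<in>qbasis n W. (cmod (\<psi> k))\<^sup>2)"

definition pw :: "nat \<Rightarrow> qstate \<Rightarrow> nat \<Rightarrow> nat \<Rightarrow> real" where
  "pw W \<psi> i j = (\<Sum>w<W. (cmod (\<psi> (i,j,0,w)))\<^sup>2 + (cmod (\<psi> (i,j,1,w)))\<^sup>2)"

lemma qbasis_eq: "qbasis n W = {..<n} \<times> {..<n} \<times> {..<2} \<times> {..<W}"
  by (auto simp: qbasis_def)

lemma finite_qbasis[simp]: "finite (qbasis n W)"
  by (simp add: qbasis_eq)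

lemma sum_qbasis:
  "(\<Sum>k\<in>qbasis n W. f k) = (\<Sum>i<n. \<Sum>j<n. \<Sum>w<W. f (i,j,0,w) + f (i,j,1,w))"
proof -
  have l2: "{..<2::nat} = {0,1}" by auto
  have "(\<Sum>k\<in>qbasis n W. f k) = (\<Sum>i<n. \<Sum>j<n. \<Sum>b<2. \<Sum>w<W. f (i,j,b,w))"
    by (simp add: qbasis_eq sum.cartesian_product)
  also have "\<dots> = (\<Sum>i<n. \<Sum>j<n. \<Sum>w<W. f (i,j,0,w) + f (i,j,1,w))"
    by (simp add: l2 sum.distrib)
  finally show ?thesis .
qed

lemma ip_self: "ip n W \<psi> \<psi> = complex_of_real (nrm n W \<psi>)"
  unfolding ip_def nrm_def of_real_sum
  by (intro sum.cong refl) (metis complex_norm_square mult.commute of_real_power)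

lemma nrm_pw: "nrm n W \<psi> = (\<Sum>i<n. \<Sum>j<n. pw W \<psi> i j)"
  by (simp add: nrm_def pw_def sum_qbasis)

lemma pw_nonneg: "pw W \<psi> i j \<ge> 0"
  by (simp add: pw_def sum_nonneg)

lemma unitary_ip:
  assumes "unitary_on (qbasis n W) U"
  shows "ip n W (apply_op (qbasis n W) U \<psi>) (apply_op (qbasis n W) U \<phi>) = ip n W \<psi> \<phi>"
proof -
  let ?B = "qbasis n W"
  have "ip n W (apply_op ?B U \<psi>) (apply_op ?B U \<phi>) =
     (\<Sum>k\<in>?B. cnj (\<Sum>l\<in>?B. U k l * \<psi> l) * (\<Sum>m\<in>?B. U k m * \<phi> m))"
    by (simp add: ip_def apply_op_def)
  also have "\<dots> = (\<Sum>k\<in>?B. \<Sum>l\<in>?B. \<Sum>m\<in>?B. cnj (\<psi> l) * \<phi> m * (cnj (U k l) * U k m))"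
    by (simp add: sum_distrib_left sum_distrib_right mult_ac)
  also have "\<dots> = (\<Sum>l\<in>?B. \<Sum>m\<in>?B. \<Sum>k\<in>?B. cnj (\<psi> l) * \<phi> m * (cnj (U k l) * U k m))"
    by (rule trans[OF sum.swap], rule sum.cong[OF refl], rule sum.swap)
  also have "\<dots> = (\<Sum>l\<in>?B. \<Sum>m\<in>?B. cnj (\<psi> l) * \<phi> m * (if l = m then 1 else 0))"
    using assms unfolding unitary_on_def by (simp add: sum_distrib_left[symmetric])
  also have "\<dots> = (\<Sum>l\<in>?B. \<Sum>m\<in>?B. if l = m then cnj (\<psi> l) * \<phi> m else 0)"
    by (intro sum.cong refl) simp
  also have "\<dots> = ip n W \<psi> \<phi>"
    by (simp add: ip_def sum.delta)
  finally show ?thesis .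
qed

lemma half_mono: "(p::real) \<le> p' \<Longrightarrow> q \<le> q' \<Longrightarrow> (p + q) / 2 \<le> (p' + q') / 2"
  by simp

lemma blk_ineq:
  fixes a0 a1 c0 c1 :: complex and s :: real
  assumes "s > 0"
  shows "cmod (cnj a1 * c0 + cnj a0 * c1 - (cnj a0 * c0 + cnj a1 * c1))
          \<le> s * ((cmod a0)\<^sup>2 + (cmod a1)\<^sup>2) + ((cmod c0)\<^sup>2 + (cmod c1)\<^sup>2) / s"
proof -
  have e: "cnj a1 * c0 + cnj a0 * c1 - (cnj a0 * c0 + cnj a1 * c1) = cnj (a1 - a0) * (c0 - c1)"
    by (simp add: algebra_simps)
  define X where "X = cmod (a1 - a0)"
  define Y where "Y = cmod (c0 - c1)"
  have X2: "X\<^sup>2 \<le> 2 * ((cmod a0)\<^sup>2 + (cmod a1)\<^sup>2)"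
  proof -
    have "X \<le> cmod a0 + cmod a1" unfolding X_def using norm_triangle_ineq4[of a1 a0] by simp
    moreover have "X \<ge> 0" by (simp add: X_def)
    ultimately have "X\<^sup>2 \<le> (cmod a0 + cmod a1)\<^sup>2" by (simp add: power_mono)
    also have "\<dots> \<le> 2 * ((cmod a0)\<^sup>2 + (cmod a1)\<^sup>2)"
    proof -
      have "2 * ((cmod a0)\<^sup>2 + (cmod a1)\<^sup>2) - (cmod a0 + cmod a1)\<^sup>2 = (cmod a0 - cmod a1)\<^sup>2"
        by (simp add: power2_eq_square algebra_simps)
      moreover have "0 \<le> (cmod a0 - cmod a1)\<^sup>2" by simp
      ultimately show ?thesis by linarith
    qed
    finally show ?thesis .
  qed
  have Y2: "Y\<^sup>2 \<le> 2 * ((cmod c0)\<^sup>2 + (cmod c1)\<^sup>2)"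
  proof -
    have "Y \<le> cmod c0 + cmod c1" unfolding Y_def by (rule norm_triangle_ineq4)
    moreover have "Y \<ge> 0" by (simp add: Y_def)
    ultimately have "Y\<^sup>2 \<le> (cmod c0 + cmod c1)\<^sup>2" by (simp add: power_mono)
    also have "\<dots> \<le> 2 * ((cmod c0)\<^sup>2 + (cmod c1)\<^sup>2)"
    proof -
      have "2 * ((cmod c0)\<^sup>2 + (cmod c1)\<^sup>2) - (cmod c0 + cmod c1)\<^sup>2 = (cmod c0 - cmod c1)\<^sup>2"
        by (simp add: power2_eq_square algebra_simps)
      moreover have "0 \<le> (cmod c0 - cmod c1)\<^sup>2" by simp
      ultimately show ?thesis by linarith
    qed
    finally show ?thesis .
  qed
  have "X * Y \<le> (s * X\<^sup>2 + Y\<^sup>2 / s) / 2"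
  proof -
    have "0 \<le> (s * X - Y)\<^sup>2 / s" using assms by simp
    also have "(s * X - Y)\<^sup>2 / s = s * X\<^sup>2 + Y\<^sup>2 / s - 2 * X * Y"
      using assms by (simp add: power2_eq_square field_simps)
    finally show ?thesis by simp
  qed
  also have "\<dots> \<le> s * ((cmod a0)\<^sup>2 + (cmod a1)\<^sup>2) + ((cmod c0)\<^sup>2 + (cmod c1)\<^sup>2) / s"
  proof -
    have "s * X\<^sup>2 \<le> s * (2 * ((cmod a0)\<^sup>2 + (cmod a1)\<^sup>2))"
      using X2 assms by (intro mult_left_mono) auto
    moreover have "Y\<^sup>2 / s \<le> (2 * ((cmod c0)\<^sup>2 + (cmod c1)\<^sup>2)) / s"
      using Y2 assms by (intro divide_right_mono) auto
    ultimately have "(s * X\<^sup>2 + Y\<^sup>2 / s) / 2 \<le> (s * (2 * ((cmod a0)\<^sup>2 + (cmod a1)\<^sup>2)) + (2 * ((cmod c0)\<^sup>2 + (cmod c1)\<^sup>2)) / s) / 2"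
      by (rule half_mono)
    also have "\<dots> = s * ((cmod a0)\<^sup>2 + (cmod a1)\<^sup>2) + ((cmod c0)\<^sup>2 + (cmod c1)\<^sup>2) / s"
      using assms by (simp add: field_simps)
    finally show ?thesis .
  qed
  finally have XY: "X * Y \<le> s * ((cmod a0)\<^sup>2 + (cmod a1)\<^sup>2) + ((cmod c0)\<^sup>2 + (cmod c1)\<^sup>2) / s" .
  have cm: "cmod (cnj (a1 - a0) * (c0 - c1)) = X * Y"
    unfolding X_def Y_def norm_mult complex_mod_cnj ..
  show ?thesis unfolding e cm by (rule XY)
qed

lemma qg0: "i < n \<Longrightarrow> j < n \<Longrightarrow> w < W \<Longrightarrow>
  query_gate n W M \<psi> (i,j,0,w) = \<psi> (i,j, if M i j then 1 else 0, w)"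
  by (simp add: query_gate_def qbasis_def)

lemma qg1: "i < n \<Longrightarrow> j < n \<Longrightarrow> w < W \<Longrightarrow>
  query_gate n W M \<psi> (i,j,Suc 0,w) = \<psi> (i,j, if M i j then 0 else 1, w)"
  by (simp add: query_gate_def qbasis_def)

lemma query_blk:
  fixes \<psi> \<phi> :: qstate
  assumes "s > 0"
  shows "cmod (\<Sum>w<W. cnj (\<psi> (i,j, if m then 1 else 0, w)) * \<phi> (i,j, if m' then 1 else 0, w)
                   + cnj (\<psi> (i,j, if m then 0 else 1, w)) * \<phi> (i,j, if m' then 0 else 1, w)
                   - (cnj (\<psi> (i,j,0,w)) * \<phi> (i,j,0,w) + cnj (\<psi> (i,j,1,w)) * \<phi> (i,j,1,w)))
         \<le> (if m = m' then 0 else s * pw W \<psi> i j + pw W \<phi> i j / s)"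
proof (cases "m = m'")
  case True
  then show ?thesis by (cases m) (simp_all add: algebra_simps)
next
  case False
  let ?f = "\<lambda>w. cnj (\<psi> (i,j, if m then 1 else 0, w)) * \<phi> (i,j, if m' then 1 else 0, w)
                   + cnj (\<psi> (i,j, if m then 0 else 1, w)) * \<phi> (i,j, if m' then 0 else 1, w)
                   - (cnj (\<psi> (i,j,0,w)) * \<phi> (i,j,0,w) + cnj (\<psi> (i,j,1,w)) * \<phi> (i,j,1,w))"
  have "cmod (\<Sum>w<W. ?f w) \<le> (\<Sum>w<W. cmod (?f w))" by (rule norm_sum)
  also have "\<dots> \<le> (\<Sum>w<W. s * ((cmod (\<psi> (i,j,0,w)))\<^sup>2 + (cmod (\<psi> (i,j,1,w)))\<^sup>2)
                      + ((cmod (\<phi> (i,j,0,w)))\<^sup>2 + (cmod (\<phi> (i,j,1,w)))\<^sup>2) / s)"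
  proof (rule sum_mono)
    fix w
    have "cmod (?f w) = cmod (cnj (\<psi> (i,j,1,w)) * \<phi> (i,j,0,w) + cnj (\<psi> (i,j,0,w)) * \<phi> (i,j,1,w)
               - (cnj (\<psi> (i,j,0,w)) * \<phi> (i,j,0,w) + cnj (\<psi> (i,j,1,w)) * \<phi> (i,j,1,w)))"
      using False by (cases m) (simp_all add: algebra_simps)
    also have "\<dots> \<le> s * ((cmod (\<psi> (i,j,0,w)))\<^sup>2 + (cmod (\<psi> (i,j,1,w)))\<^sup>2)
                      + ((cmod (\<phi> (i,j,0,w)))\<^sup>2 + (cmod (\<phi> (i,j,1,w)))\<^sup>2) / s"
      by (rule blk_ineq[OF assms])
    finally show "cmod (?f w) \<le> \<dots>" .
  qed
  also have "\<dots> = s * pw W \<psi> i j + pw W \<phi> i j / s"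
    by (simp add: pw_def sum.distrib sum_distrib_left sum_divide_distrib distrib_left add_divide_distrib)
  finally show ?thesis using False by simp
qed

lemma query_ip:
  assumes "\<And>i j. s i j > 0"
  shows "cmod (ip n W (query_gate n W M \<psi>) (query_gate n W M' \<phi>) - ip n W \<psi> \<phi>)
     \<le> (\<Sum>i<n. \<Sum>j<n. if M i j = M' i j then 0 else s i j * pw W \<psi> i j + pw W \<phi> i j / s i j)"
proof -
  define D where "D i j = (\<Sum>w<W. cnj (\<psi> (i,j, if M i j then 1 else 0, w)) * \<phi> (i,j, if M' i j then 1 else 0, w)
                   + cnj (\<psi> (i,j, if M i j then 0 else 1, w)) * \<phi> (i,j, if M' i j then 0 else 1, w)
                   - (cnj (\<psi> (i,j,0,w)) * \<phi> (i,j,0,w) + cnj (\<psi> (i,j,1,w)) * \<phi> (i,j,1,w)))" for i j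
  have "ip n W (query_gate n W M \<psi>) (query_gate n W M' \<phi>) - ip n W \<psi> \<phi> = (\<Sum>i<n. \<Sum>j<n. D i j)"
  proof -
    have "ip n W (query_gate n W M \<psi>) (query_gate n W M' \<phi>) = (\<Sum>i<n. \<Sum>j<n. \<Sum>w<W.
          cnj (\<psi> (i,j, if M i j then 1 else 0, w)) * \<phi> (i,j, if M' i j then 1 else 0, w)
                   + cnj (\<psi> (i,j, if M i j then 0 else 1, w)) * \<phi> (i,j, if M' i j then 0 else 1, w))"
      unfolding ip_def sum_qbasis
      apply (rule sum.cong[OF refl])+
      apply (simp add: qg0 qg1)
      done
    then show ?thesis unfolding D_def ip_def sum_qbasis by (simp add: sum_subtractf)
  qed
  also have "cmod \<dots> \<le> (\<Sum>i<n. cmod (\<Sum>j<n. D i j))" by (rule norm_sum)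
  also have "\<dots> \<le> (\<Sum>i<n. \<Sum>j<n. cmod (D i j))" by (intro sum_mono norm_sum)
  also have "\<dots> \<le> (\<Sum>i<n. \<Sum>j<n. if M i j = M' i j then 0 else s i j * pw W \<psi> i j + pw W \<phi> i j / s i j)"
    unfolding D_def by (intro sum_mono query_blk assms)
  finally show ?thesis .
qed

lemma query_nrm: "ip n W (query_gate n W M \<psi>) (query_gate n W M \<phi>) = ip n W \<psi> \<phi>"
  using query_ip[of "\<lambda>i j. 1" n W M \<psi> M \<phi>] by simp

lemma amgm:
  fixes x y s :: real
  assumes "s > 0"
  shows "x * y \<le> (s * x\<^sup>2 + y\<^sup>2 / s) / 2"
proof -
  have "0 \<le> (s * x - y)\<^sup>2 / s" using assms by simp
  also have "(s * x - y)\<^sup>2 / s = s * x\<^sup>2 + y\<^sup>2 / s - 2 * x * y"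
    using assms by (simp add: power2_eq_square field_simps)
  finally show ?thesis by simp
qed

definition ec :: "nat \<Rightarrow> qstate \<Rightarrow> qidx \<Rightarrow> real" where
  "ec c \<psi> k = (if fst (snd (snd k)) = c then (cmod (\<psi> k))\<^sup>2 else 0)"

lemma prob_out_ec: "prob_out n W \<psi> c = (\<Sum>k\<in>qbasis n W. ec c \<psi> k)"
  unfolding prob_out_def ec_def by (rule sum.inter_filter) simp

lemma nrm_ec: "nrm n W \<psi> = prob_out n W \<psi> 0 + prob_out n W \<psi> 1"
proof -
  have "nrm n W \<psi> = (\<Sum>k\<in>qbasis n W. ec 0 \<psi> k + ec 1 \<psi> k)"
    unfolding nrm_def
  proof (rule sum.cong[OF refl])
    fix k assume "k \<in> qbasis n W"
    then have "fst (snd (snd k)) = 0 \<or> fst (snd (snd k)) = 1" by (auto simp: qbasis_def)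
    then show "(cmod (\<psi> k))\<^sup>2 = ec 0 \<psi> k + ec 1 \<psi> k" by (auto simp: ec_def)
  qed
  then show ?thesis by (simp add: prob_out_ec sum.distrib)
qed

lemma ip_cnj: "ip n W \<psi> \<phi> = cnj (ip n W \<phi> \<psi>)"
  by (simp add: ip_def mult.commute)

lemma final_bound:
  assumes "nrm n W \<psi> = 1" "nrm n W \<phi> = 1"
    and "prob_out n W \<psi> 0 \<ge> 2/3" "prob_out n W \<phi> 1 \<ge> 2/3"
  shows "Re (ip n W \<psi> \<phi>) \<le> 17/18"
proof -
  let ?B = "qbasis n W"
  define wt :: "qidx \<Rightarrow> real" where "wt k = (if fst (snd (snd k)) = 0 then 7/10 else 10/7)" for k
  have "Re (ip n W \<psi> \<phi>) \<le> cmod (ip n W \<psi> \<phi>)" by (rule complex_Re_le_cmod)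
  also have "\<dots> \<le> (\<Sum>k\<in>?B. cmod (cnj (\<psi> k) * \<phi> k))" unfolding ip_def by (rule norm_sum)
  also have "\<dots> = (\<Sum>k\<in>?B. cmod (\<psi> k) * cmod (\<phi> k))" by (simp add: norm_mult)
  also have "\<dots> \<le> (\<Sum>k\<in>?B. (wt k * (cmod (\<psi> k))\<^sup>2 + (cmod (\<phi> k))\<^sup>2 / wt k) / 2)"
    by (rule sum_mono, rule amgm) (simp add: wt_def)
  also have "\<dots> = (\<Sum>k\<in>?B. 7/20 * ec 0 \<psi> k + 5/7 * ec 1 \<psi> k + 5/7 * ec 0 \<phi> k + 7/20 * ec 1 \<phi> k)"
  proof (rule sum.cong[OF refl])
    fix k assume "k \<in> ?B"
    then have "fst (snd (snd k)) = 0 \<or> fst (snd (snd k)) = 1" by (auto simp: qbasis_def)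
    then show "(wt k * (cmod (\<psi> k))\<^sup>2 + (cmod (\<phi> k))\<^sup>2 / wt k) / 2 =
        7/20 * ec 0 \<psi> k + 5/7 * ec 1 \<psi> k + 5/7 * ec 0 \<phi> k + 7/20 * ec 1 \<phi> k"
      by (elim disjE) (simp_all add: ec_def wt_def field_simps)
  qed
  also have "\<dots> = 7/20 * prob_out n W \<psi> 0 + 5/7 * prob_out n W \<psi> 1
                  + 5/7 * prob_out n W \<phi> 0 + 7/20 * prob_out n W \<phi> 1"
    by (simp add: prob_out_ec sum.distrib sum_distrib_left)
  also have "\<dots> \<le> 17/18"
    using assms nrm_ec[of n W \<psi>] nrm_ec[of n W \<phi>] by linarith
  finally show ?thesis .
qed

lemma hsum:
  fixes P :: "nat \<Rightarrow> nat \<Rightarrow> real"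
  assumes z: "z permutes {..<n}" and P1: "(\<Sum>i<n. \<Sum>j<n. P i j) = 1"
    and P0: "\<And>i j. P i j \<ge> 0" and r: "r > 0" "r * r = real n"
  shows "(\<Sum>a<n. \<Sum>b<n. (P a (z a) + P b (z b)) / r + r * (P a (z b) + P b (z a))) \<le> 4 * r"
proof -
  define S where "S = (\<Sum>a<n. P a (z a))"
  have zi: "inj_on z {..<n}" using permutes_inj[OF z] by (simp add: inj_on_def inj_def)
  have zim: "z ` {..<n} = {..<n}" using permutes_image[OF z] .
  have re: "(\<Sum>b<n. f (z b)) = (\<Sum>j<n. f j)" for f :: "nat \<Rightarrow> real"
    using sum.reindex[OF zi, of f] zim by simp
  have zlt: "a < n \<Longrightarrow> z a < n" for a using zim by auto
  have S1: "S \<le> 1"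
  proof -
    have "S \<le> (\<Sum>a<n. \<Sum>j<n. P a j)" unfolding S_def
      by (intro sum_mono member_le_sum) (auto simp: P0 zlt)
    then show ?thesis using P1 by simp
  qed
  have e1: "(\<Sum>a<n. \<Sum>b<n. P a (z b)) = 1" using P1 by (simp add: re)
  have e2: "(\<Sum>a<n. \<Sum>b<n. P b (z a)) = 1"
    using e1 by (subst sum.swap) simp
  have "(\<Sum>a<n. \<Sum>b<n. (P a (z a) + P b (z b)) / r + r * (P a (z b) + P b (z a)))
      = 2 * real n * S / r + r * (\<Sum>a<n. \<Sum>b<n. P a (z b)) + r * (\<Sum>a<n. \<Sum>b<n. P b (z a))"
  proof -
    have "(\<Sum>a<n. \<Sum>b<n. (P a (z a) + P b (z b)) / r + r * (P a (z b) + P b (z a)))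
       = (\<Sum>a<n. \<Sum>b<n. P a (z a) / r + P b (z b) / r + r * P a (z b) + r * P b (z a))"
      by (simp add: add_divide_distrib distrib_left add.assoc)
    also have "\<dots> = (\<Sum>a<n. \<Sum>b<n. P a (z a) / r) + (\<Sum>a<n. \<Sum>b<n. P b (z b) / r)
        + r * (\<Sum>a<n. \<Sum>b<n. P a (z b)) + r * (\<Sum>a<n. \<Sum>b<n. P b (z a))"
      by (simp only: sum.distrib sum_distrib_left)
    also have "(\<Sum>a<n. \<Sum>b<n. P a (z a) / r) = real n * S / r"
      by (simp add: S_def sum_divide_distrib sum_distrib_left mult.commute)
    also have "(\<Sum>a<n. \<Sum>b<n. P b (z b) / r) = real n * S / r"
      by (simp add: S_def sum_divide_distrib[symmetric])
    finally show ?thesis by simp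
  qed
  also have "\<dots> = 2 * real n * S / r + 2 * r" using e1 e2 by simp
  also have "\<dots> \<le> 2 * real n / r + 2 * r"
  proof -
    have "2 * real n * S \<le> 2 * real n" using S1 by (simp add: mult_left_le)
    then show ?thesis using r(1) by (intro add_right_mono divide_right_mono) auto
  qed
  also have "2 * real n / r = 2 * (r * r) / r" by (simp only: r(2))
  also have "\<dots> = 2 * r" using r(1) by simp
  finally show ?thesis by linarith
qed



lemma dsum:
  fixes f :: "nat \<Rightarrow> nat \<Rightarrow> real"
  assumes "a < n" "c < n"
  shows "(\<Sum>i<n. \<Sum>j<n. if i = a \<and> j = c then f i j else 0) = f a c"
proof -
  have "(\<Sum>j<n. if i = a \<and> j = c then f i j else 0) = (if i = a then f i c else 0)" for i
    using assms by (cases "i = a") (simp_all add: sum.delta)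
  then show ?thesis using assms by (simp add: sum.delta)
qed

lemma pt_bound:
  fixes g :: "nat \<Rightarrow> nat \<Rightarrow> real"
  assumes g0: "g i j \<ge> 0" and h: "\<not> d \<Longrightarrow> (i = a \<or> i = b) \<and> (j = c \<or> j = e)"
  shows "(if d then 0 else g i j) \<le> (if i = a \<and> j = c then g i j else 0) + (if i = a \<and> j = e then g i j else 0)
     + (if i = b \<and> j = c then g i j else 0) + (if i = b \<and> j = e then g i j else 0)"
proof -
  have nn: "0 \<le> (if P then g i j else 0)" for P using g0 by simp
  have ac: "0 \<le> (if i = a \<and> j = c then g i j else 0)" by (rule nn)
  have ae: "0 \<le> (if i = a \<and> j = e then g i j else 0)" by (rule nn)
  have bc: "0 \<le> (if i = b \<and> j = c then g i j else 0)" by (rule nn)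
  have be: "0 \<le> (if i = b \<and> j = e then g i j else 0)" by (rule nn)
  show ?thesis
  proof (cases d)
    case True
    then show ?thesis using ac ae bc be by simp
  next
    case False
    then have hh: "(i = a \<or> i = b) \<and> (j = c \<or> j = e)" using h by blast
    have "g i j \<le> (if i = a \<and> j = c then g i j else 0) + (if i = a \<and> j = e then g i j else 0)
     + (if i = b \<and> j = c then g i j else 0) + (if i = b \<and> j = e then g i j else 0)"
    proof -
      consider "i = a \<and> j = c" | "i = a \<and> j = e" | "i = b \<and> j = c" | "i = b \<and> j = e" using hh by blast
      then show ?thesis
      proof cases
        case 1
        then have "(if i = a \<and> j = c then g i j else 0) = g i j" by simp
        then show ?thesis using ae bc be by linarith
      next
        case 2
        then have "(if i = a \<and> j = e then g i j else 0) = g i j" by simp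
        then show ?thesis using ac bc be by linarith
      next
        case 3
        then have "(if i = b \<and> j = c then g i j else 0) = g i j" by simp
        then show ?thesis using ac ae be by linarith
      next
        case 4
        then have "(if i = b \<and> j = e then g i j else 0) = g i j" by simp
        then show ?thesis using ac ae bc by linarith
      qed
    qed
    then show ?thesis using False by simp
  qed
qed
lemma pair_step:
  fixes x :: "nat \<Rightarrow> nat" and r :: real
  assumes U: "unitary_on (qbasis n W) V" and x: "x permutes {..<n}"
    and a: "a < n" and b: "b < n" and r: "r > 0"
    and y: "y = x \<circ> Transposition.transpose a b"
  shows "Re (ip n W \<psi> \<phi>) - Re (ip n W (apply_op (qbasis n W) V (query_gate n W (perm_matrix x) \<psi>))
                                   (apply_op (qbasis n W) V (query_gate n W (perm_matrix y) \<phi>)))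
     \<le> ((pw W \<psi> a (x a) + pw W \<psi> b (x b)) / r + r * (pw W \<psi> a (x b) + pw W \<psi> b (x a)))
       + ((pw W \<phi> a (y a) + pw W \<phi> b (y b)) / r + r * (pw W \<phi> a (y b) + pw W \<phi> b (y a)))"
    (is "?L \<le> ?R")
proof -
  define M where "M = perm_matrix x"
  define M' where "M' = perm_matrix y"
  define s where "s i j = (if x i = j then 1 / r else r)" for i j
  have s0: "s i j > 0" for i j using r by (simp add: s_def)
  define g where "g i j = s i j * pw W \<psi> i j + pw W \<phi> i j / s i j" for i j
  have g0: "g i j \<ge> 0" for i j
    using s0[of i j] by (simp add: g_def pw_nonneg)
  have R0: "?R \<ge> 0" using r by (simp add: pw_nonneg)
  define Dsum where "Dsum = (\<Sum>i<n. \<Sum>j<n. if M i j = M' i j then 0 else g i j)"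
  have "?L = Re (ip n W \<psi> \<phi> - ip n W (query_gate n W M \<psi>) (query_gate n W M' \<phi>))"
    by (simp add: unitary_ip[OF U] M_def M'_def)
  also have "\<dots> \<le> cmod (ip n W \<psi> \<phi> - ip n W (query_gate n W M \<psi>) (query_gate n W M' \<phi>))"
    by (rule complex_Re_le_cmod)
  also have "\<dots> = cmod (ip n W (query_gate n W M \<psi>) (query_gate n W M' \<phi>) - ip n W \<psi> \<phi>)"
    by (rule norm_minus_commute)
  also have "\<dots> \<le> Dsum"
    unfolding Dsum_def g_def by (rule query_ip) (rule s0)
  finally have LD: "?L \<le> Dsum" .
  show ?thesis
  proof (cases "a = b")
    case True
    then have "y = x" using y by simp
    then have "Dsum = 0" by (simp add: Dsum_def M_def M'_def)
    then show ?thesis using LD R0 by linarith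
  next
    case False
    have xab: "x a \<noteq> x b" using False permutes_inj[OF x] by (auto simp: inj_def)
    have ya: "y a = x b" and yb: "y b = x a" using y by auto
    have yo: "i \<noteq> a \<Longrightarrow> i \<noteq> b \<Longrightarrow> y i = x i" for i using y by auto
    have xalt: "x a < n" "x b < n" using permutes_image[OF x] a b by auto
    have "Dsum \<le> (\<Sum>i<n. \<Sum>j<n. (if i = a \<and> j = x a then g i j else 0) + (if i = a \<and> j = x b then g i j else 0)
                 + (if i = b \<and> j = x a then g i j else 0) + (if i = b \<and> j = x b then g i j else 0))"
      unfolding Dsum_def
    proof (rule sum_mono, rule sum_mono)
      fix i j
      have h: "(i = a \<or> i = b) \<and> (j = x a \<or> j = x b)" if nd: "\<not> (M i j = M' i j)"
      proof -
        have iab: "i = a \<or> i = b"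
        proof (rule ccontr)
          assume "\<not> (i = a \<or> i = b)"
          then have "y i = x i" using yo by blast
          then have "M i j = M' i j" by (simp add: M_def M'_def perm_matrix_def)
          with nd show False by blast
        qed
        have "x i = j \<or> y i = j" using nd by (auto simp: M_def M'_def perm_matrix_def)
        then have "j = x a \<or> j = x b" using iab ya yb by auto
        with iab show ?thesis by blast
      qed
      show "(if M i j = M' i j then 0 else g i j) \<le> (if i = a \<and> j = x a then g i j else 0) + (if i = a \<and> j = x b then g i j else 0)
                 + (if i = b \<and> j = x a then g i j else 0) + (if i = b \<and> j = x b then g i j else 0)"
        by (rule pt_bound[OF g0 h])
    qed
    also have "\<dots> = g a (x a) + g a (x b) + g b (x a) + g b (x b)"
      using a b xalt by (simp add: sum.distrib dsum)
    also have "\<dots> = ?R"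
      using r xab by (simp add: g_def s_def ya yb field_simps)
    finally show ?thesis using LD by linarith
  qed
qed

lemma swap3:
  "(\<Sum>x\<in>A. \<Sum>a\<in>B. \<Sum>b\<in>C. f x a b) = (\<Sum>a\<in>B. \<Sum>b\<in>C. \<Sum>x\<in>A. (f x a b :: real))"
  by (rule trans[OF sum.swap], rule sum.cong[OF refl], rule sum.swap)

lemma perm_comp_tr:
  assumes "x permutes {..<n}" "a < n" "b < n"
  shows "x \<circ> Transposition.transpose a b permutes {..<n}"
  using permutes_compose[OF permutes_swap_id[of a "{..<n}" b] assms(1)] assms(2,3) by simp

lemma reindex_tr:
  assumes "a < n" "b < n"
  shows "(\<Sum>x\<in>{x. x permutes {..<n}}. G (x \<circ> Transposition.transpose a b)) = (\<Sum>x\<in>{x. x permutes {..<n}}. (G x :: real))"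
proof (rule sum.reindex_bij_witness[of _ "\<lambda>x. x \<circ> Transposition.transpose a b" "\<lambda>x. x \<circ> Transposition.transpose a b"])
  fix x assume "x \<in> {x. x permutes {..<n}}"
  then have "x permutes {..<n}" by simp
  then show "x \<circ> Transposition.transpose a b \<in> {x. x permutes {..<n}}"
    using perm_comp_tr assms by auto
  show "x \<circ> Transposition.transpose a b \<circ> Transposition.transpose a b = x"
    by (simp add: comp_assoc)
qed (use perm_comp_tr assms in auto)

lemma run0_indep: "run n W U M 0 = run n W U M' 0"
  by simp

lemma ip_run_one:
  assumes W: "1 \<le> W" and n: "1 \<le> n" and unit: "\<forall>t\<le>T. unitary_on (qbasis n W) (U t)"
  shows "t \<le> T \<Longrightarrow> ip n W (run n W U M t) (run n W U M t) = 1"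
proof (induction t)
  case 0
  have "ip n W init_state init_state = 1"
  proof -
    have mem: "(0,0,0,0) \<in> qbasis n W" using W n by (simp add: qbasis_def)
    have "ip n W init_state init_state = (\<Sum>k\<in>qbasis n W. if k = (0,0,0,0) then 1 else 0)"
      unfolding ip_def init_state_def by (intro sum.cong refl) simp
    also have "\<dots> = 1" using mem by (simp add: sum.delta)
    finally show ?thesis .
  qed
  then show ?case using unit by (simp add: unitary_ip)
next
  case (Suc t)
  then have "ip n W (run n W U M t) (run n W U M t) = 1" by simp
  then show ?case using unit Suc.prems by (simp add: unitary_ip query_nrm)
qed

lemma nrm_run_one:
  assumes W: "1 \<le> W" and n: "1 \<le> n" and unit: "\<forall>t\<le>T. unitary_on (qbasis n W) (U t)"
    and t: "t \<le> T"
  shows "nrm n W (run n W U M t) = 1"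
  using ip_run_one[OF W n unit t, of M] by (simp add: ip_self)

lemma main_bound:
  assumes cs: "computes_sign n W T U" and n2: "n \<ge> 2"
  shows "real n * (real n - 1) \<le> 144 * sqrt (real n) * real T"
proof -
  have W1: "1 \<le> W" and unit: "\<forall>t\<le>T. unitary_on (qbasis n W) (U t)"
    and corr: "\<And>\<pi>. \<pi> permutes {..<n} \<Longrightarrow>
        prob_out n W (run n W U (perm_matrix \<pi>) T) (if sign \<pi> = (1::int) then 0 else 1) \<ge> 2/3"
    using cs unfolding computes_sign_def by auto
  have n1: "1 \<le> n" using n2 by simp
  define F where "F t x = run n W U (perm_matrix x) t" for t x
  define Sn where "Sn = {x. x permutes {..<n}}"
  define N where "N = real (card Sn)"
  define r where "r = sqrt (real n)"
  define tr where "tr a b = Transposition.transpose a b" for a b :: nat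
  have r0: "r > 0" using n2 by (simp add: r_def)
  have rr: "r * r = real n" by (simp add: r_def)
  have finS: "finite Sn" unfolding Sn_def by (rule finite_permutations) simp
  have idS: "id \<in> Sn" by (simp add: Sn_def permutes_id)
  have N0: "N > 0" using finS idS by (auto simp: N_def card_gt_0_iff)
  have nrm1: "t \<le> T \<Longrightarrow> nrm n W (F t x) = 1" for t x
    unfolding F_def by (rule nrm_run_one[OF W1 n1 unit])
  have trS: "x \<in> Sn \<Longrightarrow> a < n \<Longrightarrow> b < n \<Longrightarrow> x \<circ> tr a b \<in> Sn" for x a b
    by (simp add: Sn_def tr_def perm_comp_tr)
  define \<Phi> where "\<Phi> t = (\<Sum>x\<in>Sn. \<Sum>a<n. \<Sum>b<n. Re (ip n W (F t x) (F t (x \<circ> tr a b))))" for t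
  define H where "H t z a b = (pw W (F t z) a (z a) + pw W (F t z) b (z b)) / r
                      + r * (pw W (F t z) a (z b) + pw W (F t z) b (z a))" for t z a b
  have Phi0: "\<Phi> 0 = N * real n * real n"
  proof -
    have "Re (ip n W (F 0 x) (F 0 y)) = 1" for x y
    proof -
      have "F 0 y = F 0 x" by (simp add: F_def)
      then show ?thesis using nrm1[of 0 x] by (simp add: ip_self)
    qed
    then show ?thesis by (simp add: \<Phi>_def N_def)
  qed
  have Hsum: "t \<le> T \<Longrightarrow> x \<in> Sn \<Longrightarrow> (\<Sum>a<n. \<Sum>b<n. H t x a b) \<le> 4 * r" for t x
    unfolding H_def
    by (rule hsum[of x n "pw W (F t x)" r]) (auto simp: Sn_def nrm1 nrm_pw[symmetric] pw_nonneg r0 rr)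
  have step: "\<Phi> t - \<Phi> (Suc t) \<le> 8 * r * N" if t: "t < T" for t
  proof -
    have U1: "unitary_on (qbasis n W) (U (Suc t))" using unit t by simp
    have "\<Phi> t - \<Phi> (Suc t) = (\<Sum>x\<in>Sn. \<Sum>a<n. \<Sum>b<n.
        Re (ip n W (F t x) (F t (x \<circ> tr a b))) - Re (ip n W (F (Suc t) x) (F (Suc t) (x \<circ> tr a b))))"
      by (simp add: \<Phi>_def sum_subtractf)
    also have "\<dots> \<le> (\<Sum>x\<in>Sn. \<Sum>a<n. \<Sum>b<n. H t x a b + H t (x \<circ> tr a b) a b)"
    proof (rule sum_mono, rule sum_mono, rule sum_mono)
      fix x a b assume x: "x \<in> Sn" and a: "a \<in> {..<n}" and b: "b \<in> {..<n}"
      have xp: "x permutes {..<n}" using x by (simp add: Sn_def)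
      have e: "F (Suc t) z = apply_op (qbasis n W) (U (Suc t)) (query_gate n W (perm_matrix z) (F t z))" for z
        by (simp add: F_def)
      show "Re (ip n W (F t x) (F t (x \<circ> tr a b))) - Re (ip n W (F (Suc t) x) (F (Suc t) (x \<circ> tr a b)))
          \<le> H t x a b + H t (x \<circ> tr a b) a b"
        unfolding e H_def
        by (rule pair_step[OF U1 xp _ _ r0]) (use a b in \<open>simp_all add: tr_def\<close>)
    qed
    also have "\<dots> = (\<Sum>x\<in>Sn. \<Sum>a<n. \<Sum>b<n. H t x a b) + (\<Sum>x\<in>Sn. \<Sum>a<n. \<Sum>b<n. H t (x \<circ> tr a b) a b)"
      by (simp add: sum.distrib)
    also have "(\<Sum>x\<in>Sn. \<Sum>a<n. \<Sum>b<n. H t (x \<circ> tr a b) a b) = (\<Sum>x\<in>Sn. \<Sum>a<n. \<Sum>b<n. H t x a b)"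
    proof -
      have "(\<Sum>x\<in>Sn. \<Sum>a<n. \<Sum>b<n. H t (x \<circ> tr a b) a b) = (\<Sum>a<n. \<Sum>b<n. \<Sum>x\<in>Sn. H t (x \<circ> tr a b) a b)"
        by (rule swap3)
      also have "\<dots> = (\<Sum>a<n. \<Sum>b<n. \<Sum>x\<in>Sn. H t x a b)"
        unfolding Sn_def tr_def
        by (intro sum.cong refl reindex_tr) auto
      also have "\<dots> = (\<Sum>x\<in>Sn. \<Sum>a<n. \<Sum>b<n. H t x a b)"
        by (rule swap3[symmetric])
      finally show ?thesis .
    qed
    also have "(\<Sum>x\<in>Sn. \<Sum>a<n. \<Sum>b<n. H t x a b) \<le> (\<Sum>x\<in>Sn. 4 * r)"
      by (rule sum_mono) (use t in \<open>simp add: Hsum\<close>)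
    also have "(\<Sum>x\<in>Sn. 4 * r) = 4 * r * N" by (simp add: N_def)
    finally show ?thesis by (simp add: mult_ac)
  qed
  have fin: "\<Phi> T \<le> N * real n * (17/18 * real n + 1/18)"
  proof -
    have "\<Phi> T \<le> (\<Sum>x\<in>Sn. \<Sum>a<n. \<Sum>b<n. 17/18 + (if a = b then 1/18 else 0))"
      unfolding \<Phi>_def
    proof (rule sum_mono, rule sum_mono, rule sum_mono)
      fix x a b assume x: "x \<in> Sn" and a: "a \<in> {..<n}" and b: "b \<in> {..<n}"
      have xp: "x permutes {..<n}" using x by (simp add: Sn_def)
      show "Re (ip n W (F T x) (F T (x \<circ> tr a b))) \<le> 17/18 + (if a = b then 1/18 else 0)"
      proof (cases "a = b")
        case True
        then have "x \<circ> tr a b = x" by (simp add: tr_def)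
        then show ?thesis using True nrm1[of T x] by (simp add: ip_self)
      next
        case False
        define y where "y = x \<circ> tr a b"
        have yp: "y permutes {..<n}" using trS[OF x] a b by (simp add: y_def Sn_def)
        have px: "permutation x" using xp by (rule permutes_imp_permutation[rotated]) simp
        have sy: "sign y = - sign x"
          using False by (simp add: y_def tr_def sign_compose[OF px permutation_swap_id] sign_swap_id)
        have bound: "Re (ip n W (F T x) (F T y)) \<le> 17/18"
        proof (cases "sign x = 1")
          case True
          have "prob_out n W (F T x) 0 \<ge> 2/3" using corr[OF xp] True by (simp add: F_def)
          moreover have "prob_out n W (F T y) 1 \<ge> 2/3" using corr[OF yp] True sy by (simp add: F_def)
          ultimately show ?thesis using nrm1[of T x] nrm1[of T y] by (intro final_bound) auto
        next
          case False
          then have sx: "sign x = -1" by (cases rule: sign_cases[of x]) auto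
          have "prob_out n W (F T y) 0 \<ge> 2/3" using corr[OF yp] sx sy by (simp add: F_def)
          moreover have "prob_out n W (F T x) 1 \<ge> 2/3" using corr[OF xp] sx by (simp add: F_def)
          ultimately have "Re (ip n W (F T y) (F T x)) \<le> 17/18"
            using nrm1[of T x] nrm1[of T y] by (intro final_bound) auto
          then show ?thesis by (subst ip_cnj) simp
        qed
        then show ?thesis using False by (simp add: y_def)
      qed
    qed
    also have "\<dots> = N * real n * (17/18 * real n + 1/18)"
    proof -
      have "(\<Sum>b<n. 17/18 + (if a = b then 1/18 else 0)) = 17/18 * real n + 1/18" if "a < n" for a :: nat
        using that by (simp add: sum.distrib sum.delta)
      then show ?thesis by (simp add: N_def)
    qed
    finally show ?thesis .
  qed
  have tele: "t \<le> T \<Longrightarrow> \<Phi> 0 - \<Phi> t \<le> real t * (8 * r * N)" for t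
  proof (induction t)
    case 0
    then show ?case by simp
  next
    case (Suc t)
    then have "\<Phi> 0 - \<Phi> t \<le> real t * (8 * r * N)" by simp
    moreover have "\<Phi> t - \<Phi> (Suc t) \<le> 8 * r * N" using Suc.prems by (intro step) simp
    ultimately show ?case by (simp add: algebra_simps)
  qed
  have key: "N * real n * real n - N * real n * (17/18 * real n + 1/18) \<le> real T * (8 * r * N)"
    using tele[of T] Phi0 fin by simp
  have "N * (real n * (real n - 1)) = 18 * (N * real n * real n - N * real n * (17/18 * real n + 1/18))"
    by (simp add: algebra_simps)
  also have "\<dots> \<le> 18 * (real T * (8 * r * N))" using key by simp
  also have "\<dots> = N * (144 * r * real T)" by (simp add: algebra_simps)
  finally have "N * (real n * (real n - 1)) \<le> N * (144 * r * real T)" .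
  then have "real n * (real n - 1) \<le> 144 * r * real T" using N0 by simp
  then show ?thesis by (simp add: r_def)
qed

lemma powr_three_halves: "real n powr (3/2) = real n * sqrt (real n)"
proof -
  have "real n powr (3/2) = real n powr (1 + 1/2)" by simp
  also have "\<dots> = real n powr 1 * real n powr (1/2)" by (rule powr_add)
  also have "\<dots> = real n * sqrt (real n)" by (simp add: powr_half_sqrt)
  finally show ?thesis .
qed

theorem mainTheorem10:
  shows "\<exists>c>0. \<exists>N0. \<forall>n\<ge>N0. \<forall>W T U. computes_sign n W T U \<longrightarrow>
           real T \<ge> c * real n powr (3/2)"
proof (intro exI[of _ "1/288"] conjI exI[of _ "2::nat"] allI impI)
  show "(0::real) < 1/288" by simp
next
  fix n :: nat and W T U
  assume n2: "2 \<le> n" and cs: "computes_sign n W T U"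
  define q where "q = sqrt (real n)"
  have q0: "q > 0" using n2 by (simp add: q_def)
  have qq: "q * q = real n" by (simp add: q_def)
  have mb: "real n * (real n - 1) \<le> 144 * q * real T"
    using main_bound[OF cs n2] by (simp add: q_def)
  have "q * (q * (real n - 1)) = (q * q) * (real n - 1)" by (rule mult.assoc[symmetric])
  also have "\<dots> = real n * (real n - 1)" by (simp only: qq)
  also have "\<dots> \<le> 144 * q * real T" by (rule mb)
  also have "\<dots> = q * (144 * real T)" by (simp add: mult_ac)
  finally have "q * (q * (real n - 1)) \<le> q * (144 * real T)" .
  then have h1: "q * (real n - 1) \<le> 144 * real T" using q0 by simp
  have h2: "real n \<le> 2 * (real n - 1)" using n2 by simp
  have "real n * q \<le> 2 * (real n - 1) * q" using h2 q0 by (intro mult_right_mono) auto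
  also have "\<dots> = 2 * (q * (real n - 1))" by simp
  also have "\<dots> \<le> 288 * real T" using h1 by simp
  finally have "real n * q \<le> 288 * real T" .
  then show "1/288 * real n powr (3/2) \<le> real T"
    by (simp add: powr_three_halves q_def)
qed

end
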